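(* Let $A\in\mathbb{R}^{m\times N}$ with $N=pn$, let $\mathbf{x}\in\mathbb{R}^N$ be block $k$-sparse ($\lVert\mathbf{x}\rVert_{2,0}\le k$), and let $\mathbf{y}=A\mathbf{x}+\boldsymbol{\epsilon}$. For any $q\in(1,\infty]$: 1) If $\lVert\boldsymbol{\epsilon}\rVert_2\le\zeta$, then the solution $\hat{\mathbf{x}}$ of the block basis pursuit $\min_{\mathbf{z}}\lVert\mathbf{z}\rVert_{2,1}$ s.t. $\lVert\mathbf{y}-A\mathbf{z}\rVert_2\le\zeta$ obeys $$\lVert\hat{\mathbf{x}}-\mathbf{x}\rVert_{2,q}\le\frac{2\zeta}{\beta_{q,2^{\frac{q}{q-1}}k}(A)},\qquad \lVert\hat{\mathbf{x}}-\mathbf{x}\rVert_{2,1}\le\frac{4k^{1-1/q}\zeta}{\beta_{q,2^{\frac{q}{q-1}}k}(A)}.$$ 2) If $\lVert A^T\boldsymbol{\epsilon}\rVert_{2,\infty}\le\mu$, then the solution $\hat{\mathbf{x}}$ of the block Dantzig selector $\min_{\mathbf{z}}\lVert\mathbf{z}\rVert_{2,1}$ s.t. $\lVert A^T(\mathbf{y}-A\mathbf{z})\rVert_{2,\infty}\le\mu$ obeys $$\lVert\hat{\mathbf{x}}-\mathbf{x}\rVert_{2,q}\le\frac{4k^{1-1/q}}{\beta^2_{q,2^{\frac{q}{q-1}}k}(A)}\mu,\qquad \lVert\hat{\mathbf{x}}-\mathbf{x}\rVert_{2,1}\le\frac{8k^{2-2/q}}{\beta^2_{q,2^{\frac{q}{q-1}}k}(A)}\mu.$$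 3) If $\lVert A^T\boldsymbol{\epsilon}\rVert_{2,\infty}\le\kappa\mu$ for some $\kappa\in(0,1)$, then the solution $\hat{\mathbf{x}}$ of the group lasso $\min_{\mathbf{z}}\frac12\lVert\mathbf{y}-A\mathbf{z}\rVert_2^2+\mu\lVert\mathbf{z}\rVert_{2,1}$ obeys $$\lVert\hat{\mathbf{x}}-\mathbf{x}\rVert_{2,q}\le\frac{1+\kappa}{1-\kappa}\cdot\frac{2k^{1-1/q}}{\beta^2_{q,(\frac{2}{1-\kappa})^{\frac{q}{q-1}}k}(A)}\mu,\qquad \lVert\hat{\mathbf{x}}-\mathbf{x}\rVert_{2,1}\le\frac{1+\kappa}{(1-\kappa)^2}\cdot\frac{4k^{2-2/q}}{\beta^2_{q,(\frac{2}{1-\kappa})^{\frac{q}{q-1}}k}(A)}\mu.$$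
   Context: Every $\mathbf{x}\in\mathbb{R}^N$ is partitioned into $p$ consecutive blocks of length $n$: $\mathbf{x}=[\mathbf{x}_1^T,\dots,\mathbf{x}_p^T]^T$, $\mathbf{x}_i\in\mathbb{R}^n$. Mixed norms: $\lVert\mathbf{x}\rVert_{2,0}=\#\{i:\mathbf{x}_i\ne\mathbf{0}\}$, $\lVert\mathbf{x}\rVert_{2,q}=(\sum_{i=1}^p\lVert\mathbf{x}_i\rVert_2^q)^{1/q}$ for $0<q<\infty$, $\lVert\mathbf{x}\rVert_{2,\infty}=\max_i\lVert\mathbf{x}_i\rVert_2$. For nonzero $\mathbf{x}$ and $q\in(1,\infty)$, $k_q(\mathbf{x})=\left(\lVert\mathbf{x}\rVert_{2,1}/\lVert\mathbf{x}\rVert_{2,q}\right)^{q/(q-1)}$, and $k_\infty(\mathbf{x})=\lVert\mathbf{x}\rVert_{2,1}/\lVert\mathbf{x}\rVert_{2,\infty}$. For $q\in(1,\infty]$ and real $s\ge1$, $\beta_{q,s}(A)=\min_{\mathbf{z}\ne\mathbf{0},\,k_q(\mathbf{z})\le s}\lVert A\mathbf{z}\rVert_2/\lVert\mathbf{z}\rVert_{2,q}$ (the paper defines it for $s\in[1,p]$; for $s\ge p$ the constraint is vacuous since $k_q\le p$). For $q=\infty$, $q/(q-1)$ is read as $1$ and $1/q$ as $0$. The parameters $\zeta\ge0$, $\mu>0$ are given; bounds are understood as $+\infty$ when the relevant $\beta$ is $0$. *)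

theory Defs
  imports "HOL-Analysis.Analysis"
begin

text \<open>Vectors of R^d are represented as functions nat => real, of which only the
  entries with index < d are relevant. A vector of R^N, N = p*n, is split into p
  consecutive blocks of length n; block i consists of the entries i*n + j, j < n.
  A real m x N matrix is a function nat => nat => real (row, column).\<close>

definition l2norm :: "nat \<Rightarrow> (nat \<Rightarrow> real) \<Rightarrow> real" where
  "l2norm d v = sqrt (\<Sum>r<d. (v r)\<^sup>2)"

definition blknorm :: "nat \<Rightarrow> (nat \<Rightarrow> real) \<Rightarrow> nat \<Rightarrow> real" where
  "blknorm n x i = sqrt (\<Sum>j<n. (x (i * n + j))\<^sup>2)"

definition norm20 :: "nat \<Rightarrow> nat \<Rightarrow> (nat \<Rightarrow> real) \<Rightarrow> nat" where
  "norm20 p n x = card {i. i < p \<and> (\<exists>j<n. x (i * n + j) \<noteq> 0)}"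

definition norm21 :: "nat \<Rightarrow> nat \<Rightarrow> (nat \<Rightarrow> real) \<Rightarrow> real" where
  "norm21 p n x = (\<Sum>i<p. blknorm n x i)"

definition norm2inf :: "nat \<Rightarrow> nat \<Rightarrow> (nat \<Rightarrow> real) \<Rightarrow> real" where
  "norm2inf p n x = (MAX i\<in>{..<p}. blknorm n x i)"

definition norm2q :: "nat \<Rightarrow> nat \<Rightarrow> ereal \<Rightarrow> (nat \<Rightarrow> real) \<Rightarrow> real" where
  "norm2q p n q x = (if q = \<infinity> then norm2inf p n x
     else (\<Sum>i<p. blknorm n x i powr real_of_ereal q) powr (1 / real_of_ereal q))"

definition qexp :: "ereal \<Rightarrow> real" where
  "qexp q = (if q = \<infinity> then 1 else real_of_ereal q / (real_of_ereal q - 1))"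

definition qinv :: "ereal \<Rightarrow> real" where
  "qinv q = (if q = \<infinity> then 0 else 1 / real_of_ereal q)"

definition kq :: "nat \<Rightarrow> nat \<Rightarrow> ereal \<Rightarrow> (nat \<Rightarrow> real) \<Rightarrow> real" where
  "kq p n q x = (if q = \<infinity> then norm21 p n x / norm2inf p n x
     else (norm21 p n x / norm2q p n q x) powr qexp q)"

definition matvec :: "nat \<Rightarrow> (nat \<Rightarrow> nat \<Rightarrow> real) \<Rightarrow> (nat \<Rightarrow> real) \<Rightarrow> (nat \<Rightarrow> real)" where
  "matvec N A z = (\<lambda>r. \<Sum>j<N. A r j * z j)"

definition tmatvec :: "nat \<Rightarrow> (nat \<Rightarrow> nat \<Rightarrow> real) \<Rightarrow> (nat \<Rightarrow> real) \<Rightarrow> (nat \<Rightarrow> real)" where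
  "tmatvec m A e = (\<lambda>j. \<Sum>r<m. A r j * e r)"

definition nonzero_vec :: "nat \<Rightarrow> (nat \<Rightarrow> real) \<Rightarrow> bool" where
  "nonzero_vec d z \<longleftrightarrow> (\<exists>j<d. z j \<noteq> 0)"

text \<open>beta_{q,s}(A) = min over nonzero z with k_q(z) <= s of |A z|_2 / |z|_{2,q}
  (the minimum is attained, so it equals the infimum).\<close>
definition beta :: "nat \<Rightarrow> nat \<Rightarrow> nat \<Rightarrow> (nat \<Rightarrow> nat \<Rightarrow> real) \<Rightarrow> ereal \<Rightarrow> real \<Rightarrow> real" where
  "beta m p n A q s = Inf {l2norm m (matvec (p * n) A z) / norm2q p n q z | z.
      nonzero_vec (p * n) z \<and> kq p n q z \<le> s}"

definition bp_solution :: "nat \<Rightarrow> nat \<Rightarrow> nat \<Rightarrow> (nat \<Rightarrow> nat \<Rightarrow> real) \<Rightarrow> (nat \<Rightarrow> real) \<Rightarrow> real \<Rightarrow> (nat \<Rightarrow> real) \<Rightarrow> bool" where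
  "bp_solution m p n A y \<zeta> xh \<longleftrightarrow>
     l2norm m (\<lambda>r. y r - matvec (p * n) A xh r) \<le> \<zeta> \<and>
     (\<forall>z. l2norm m (\<lambda>r. y r - matvec (p * n) A z r) \<le> \<zeta> \<longrightarrow> norm21 p n xh \<le> norm21 p n z)"

definition ds_solution :: "nat \<Rightarrow> nat \<Rightarrow> nat \<Rightarrow> (nat \<Rightarrow> nat \<Rightarrow> real) \<Rightarrow> (nat \<Rightarrow> real) \<Rightarrow> real \<Rightarrow> (nat \<Rightarrow> real) \<Rightarrow> bool" where
  "ds_solution m p n A y \<mu> xh \<longleftrightarrow>
     norm2inf p n (tmatvec m A (\<lambda>r. y r - matvec (p * n) A xh r)) \<le> \<mu> \<and>
     (\<forall>z. norm2inf p n (tmatvec m A (\<lambda>r. y r - matvec (p * n) A z r)) \<le> \<mu> \<longrightarrow>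
          norm21 p n xh \<le> norm21 p n z)"

definition lasso_obj :: "nat \<Rightarrow> nat \<Rightarrow> nat \<Rightarrow> (nat \<Rightarrow> nat \<Rightarrow> real) \<Rightarrow> (nat \<Rightarrow> real) \<Rightarrow> real \<Rightarrow> (nat \<Rightarrow> real) \<Rightarrow> real" where
  "lasso_obj m p n A y \<mu> z =
     1/2 * (l2norm m (\<lambda>r. y r - matvec (p * n) A z r))\<^sup>2 + \<mu> * norm21 p n z"

definition lasso_solution :: "nat \<Rightarrow> nat \<Rightarrow> nat \<Rightarrow> (nat \<Rightarrow> nat \<Rightarrow> real) \<Rightarrow> (nat \<Rightarrow> real) \<Rightarrow> real \<Rightarrow> (nat \<Rightarrow> real) \<Rightarrow> bool" where
  "lasso_solution m p n A y \<mu> xh \<longleftrightarrow>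
     (\<forall>z. lasso_obj m p n A y \<mu> xh \<le> lasso_obj m p n A y \<mu> z)"

end

theory Submission
  imports Defs
begin

lemma holder_pos:
  fixes a :: "nat \<Rightarrow> real"
  assumes fin: "finite T" and ne: "T \<noteq> {}" and pos: "\<And>i. i \<in> T \<Longrightarrow> a i > 0" and r: "r > 1"
  shows "sum a T \<le> real (card T) powr (1 - 1/r) * (\<Sum>i\<in>T. a i powr r) powr (1/r)"
proof -
  define c where "c = real (card T)"
  have c0: "c > 0" using fin ne by (simp add: c_def card_gt_0_iff)
  have "(\<Sum>i\<in>T. (1/c) *\<^sub>R a i) powr r \<le> (\<Sum>i\<in>T. (1/c) * a i powr r)"
    apply (rule convex_on_sum[OF fin ne powr_convex])
    using r pos c0 by (auto simp: c_def)
  hence j: "(sum a T / c) powr r \<le> (\<Sum>i\<in>T. a i powr r) / c"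
    by (simp add: sum_divide_distrib[symmetric] sum_distrib_left[symmetric] divide_inverse mult.commute)
  have sa: "sum a T / c \<ge> 0" using pos c0 by (simp add: sum_nonneg less_imp_le)
  have "sum a T / c = ((sum a T / c) powr r) powr (1/r)"
  proof -
    have "sum a T \<ge> 0" using pos by (simp add: sum_nonneg less_imp_le)
    thus ?thesis using sa r c0 by (simp add: powr_powr)
  qed
  also have "\<dots> \<le> ((\<Sum>i\<in>T. a i powr r) / c) powr (1/r)"
    by (rule powr_mono2) (use r j sa in auto)
  also have "\<dots> = (\<Sum>i\<in>T. a i powr r) powr (1/r) / c powr (1/r)"
    using c0 by (simp add: powr_divide sum_nonneg)
  finally have "sum a T \<le> c * ((\<Sum>i\<in>T. a i powr r) powr (1/r) / c powr (1/r))"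
    using c0 by (simp add: divide_le_eq mult.commute)
  also have "\<dots> = c powr (1 - 1/r) * (\<Sum>i\<in>T. a i powr r) powr (1/r)"
    using c0 by (simp add: powr_diff)
  finally show ?thesis by (simp add: c_def)
qed

lemma holder_card:
  fixes a :: "nat \<Rightarrow> real"
  assumes fin: "finite S" and nn: "\<And>i. i \<in> S \<Longrightarrow> a i \<ge> 0" and r: "r > 1"
  shows "sum a S \<le> real (card S) powr (1 - 1/r) * (\<Sum>i\<in>S. a i powr r) powr (1/r)"
proof -
  define T where "T = {i\<in>S. a i > 0}"
  have TS: "T \<subseteq> S" and finT: "finite T" using fin by (auto simp: T_def)
  have s1: "sum a S = sum a T"
    by (rule sum.mono_neutral_right[OF fin TS]) (use nn in \<open>force simp: T_def\<close>)
  have s2: "(\<Sum>i\<in>S. a i powr r) = (\<Sum>i\<in>T. a i powr r)"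
    by (rule sum.mono_neutral_right[OF fin TS]) (use nn in \<open>force simp: T_def\<close>)
  show ?thesis
  proof (cases "T = {}")
    case True
    then show ?thesis using s1 by simp
  next
    case False
    have "sum a T \<le> real (card T) powr (1 - 1/r) * (\<Sum>i\<in>T. a i powr r) powr (1/r)"
      by (rule holder_pos[OF finT False _ r]) (auto simp: T_def)
    also have "\<dots> \<le> real (card S) powr (1 - 1/r) * (\<Sum>i\<in>T. a i powr r) powr (1/r)"
      apply (rule mult_right_mono)
      apply (rule powr_mono2)
      using r card_mono[OF fin TS] by auto
    finally show ?thesis using s1 s2 by simp
  qed
qed

lemma blknorm_L2: "blknorm n x i = L2_set (\<lambda>j. x (i*n+j)) {..<n}"
  by (simp add: blknorm_def L2_set_def)

lemma blknorm_nonneg: "blknorm n x i \<ge> 0"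
  by (simp add: blknorm_def sum_nonneg)

lemma blknorm_add: "blknorm n (\<lambda>j. u j + v j) i \<le> blknorm n u i + blknorm n v i"
  unfolding blknorm_L2 by (rule L2_set_triangle_ineq)

lemma blknorm_uminus: "blknorm n (\<lambda>j. - u j) i = blknorm n u i"
  by (simp add: blknorm_def)

lemma blknorm_diff: "blknorm n (\<lambda>j. u j - v j) i \<le> blknorm n u i + blknorm n v i"
  using blknorm_add[of n u "\<lambda>j. - v j" i] by (simp add: blknorm_uminus)

lemma blk_sum: fixes p n :: nat and f :: "nat \<Rightarrow> 'a::comm_monoid_add" shows "(\<Sum>j<p*n. f j) = (\<Sum>i<p. \<Sum>j<n. f (i*n+j))"
proof -
  have "(\<Sum>j<p*n. f j) = (\<Sum>i<p. sum f {i*n..<i*n+n})"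
    using sum.nat_group[where g=f and k=n and n=p] by simp
  also have "\<dots> = (\<Sum>i<p. \<Sum>j<n. f (i*n+j))"
  proof (rule sum.cong[OF refl])
    fix i
    show "sum f {i*n..<i*n+n} = (\<Sum>j<n. f (i*n+j))"
      using sum.shift_bounds_nat_ivl[of f 0 "i*n" n]
      by (simp add: atLeast0LessThan add.commute)
  qed
  finally show ?thesis .
qed

lemma norm2inf_ge: "i < p \<Longrightarrow> blknorm n g i \<le> norm2inf p n g"
  unfolding norm2inf_def by (rule Max_ge) auto

lemma norm2inf_attained: "1 \<le> p \<Longrightarrow> \<exists>i<p. norm2inf p n g = blknorm n g i"
proof -
  assume "1 \<le> p"
  hence "0 \<in> {..<p}" by auto
  hence "{..<p} \<noteq> {}" by blast
  hence "norm2inf p n g \<in> (\<lambda>i. blknorm n g i) ` {..<p}"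
    unfolding norm2inf_def by (intro Max_in) auto
  thus ?thesis by auto
qed

lemma norm2inf_nonneg: "1 \<le> p \<Longrightarrow> norm2inf p n g \<ge> 0"
  using norm2inf_attained[of p n g] blknorm_nonneg by metis

lemma norm2inf_diff: "1 \<le> p \<Longrightarrow>
   norm2inf p n (\<lambda>j. u j - v j) \<le> norm2inf p n u + norm2inf p n v"
proof -
  assume p: "1 \<le> p"
  then obtain i where i: "i < p" "norm2inf p n (\<lambda>j. u j - v j) = blknorm n (\<lambda>j. u j - v j) i"
    using norm2inf_attained by blast
  have "blknorm n (\<lambda>j. u j - v j) i \<le> blknorm n u i + blknorm n v i" by (rule blknorm_diff)
  also have "\<dots> \<le> norm2inf p n u + norm2inf p n v"
    using norm2inf_ge[OF i(1)] by (intro add_mono) auto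
  finally show ?thesis using i by simp
qed

lemma matvec_diff: "matvec N A (\<lambda>j. a j - b j) r = matvec N A a r - matvec N A b r"
  by (simp add: matvec_def right_diff_distrib sum_subtractf)

lemma tmatvec_diff: "tmatvec m A (\<lambda>j. a j - b j) j = tmatvec m A a j - tmatvec m A b j"
  by (simp add: tmatvec_def right_diff_distrib sum_subtractf)

lemma inner_swap: "(\<Sum>r<m. u r * matvec N A h r) = (\<Sum>j<N. h j * tmatvec m A u j)"
  unfolding matvec_def tmatvec_def
  by (simp add: sum_distrib_left sum_distrib_right mult_ac sum.swap[of _ "{..<m}"])

lemma dual_bound: "(\<Sum>r<m. u r * matvec (p*n) A h r) \<le> norm21 p n h * norm2inf p n (tmatvec m A u)"
proof -
  define g where "g = tmatvec m A u"
  have "(\<Sum>r<m. u r * matvec (p*n) A h r) = (\<Sum>i<p. \<Sum>j<n. h (i*n+j) * g (i*n+j))"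
    unfolding inner_swap g_def by (rule blk_sum)
  also have "\<dots> \<le> (\<Sum>i<p. blknorm n h i * blknorm n g i)"
  proof (rule sum_mono)
    fix i
    have "(\<Sum>j<n. h (i*n+j) * g (i*n+j)) \<le> (\<Sum>j<n. \<bar>h (i*n+j)\<bar> * \<bar>g (i*n+j)\<bar>)"
      by (rule sum_mono) (metis abs_ge_self abs_mult)
    also have "\<dots> \<le> blknorm n h i * blknorm n g i"
      unfolding blknorm_L2 by (rule L2_set_mult_ineq)
    finally show "(\<Sum>j<n. h (i*n+j) * g (i*n+j)) \<le> blknorm n h i * blknorm n g i" .
  qed
  also have "\<dots> \<le> (\<Sum>i<p. blknorm n h i * norm2inf p n g)"
    by (rule sum_mono) (simp add: mult_left_mono blknorm_nonneg norm2inf_ge)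
  also have "\<dots> = norm21 p n h * norm2inf p n g"
    by (simp add: norm21_def sum_distrib_right)
  finally show ?thesis by (simp add: g_def)
qed

lemma l2norm_nonneg: "l2norm d v \<ge> 0"
  by (simp add: l2norm_def sum_nonneg)

lemma l2norm_sq: "(l2norm d v)\<^sup>2 = (\<Sum>r<d. (v r)\<^sup>2)"
  by (simp add: l2norm_def sum_nonneg)

lemma l2norm_diff: "l2norm d (\<lambda>r. u r - v r) \<le> l2norm d u + l2norm d v"
proof -
  have "L2_set (\<lambda>r. u r + (- v r)) {..<d} \<le> L2_set u {..<d} + L2_set (\<lambda>r. - v r) {..<d}"
    by (rule L2_set_triangle_ineq)
  thus ?thesis by (simp add: l2norm_def L2_set_def)
qed

lemma q_cases: "1 < (q::ereal) \<Longrightarrow> q = \<infinity> \<or> (\<exists>r. q = ereal r \<and> r > 1)"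
  by (cases q) auto

lemma norm2q_nonneg: "1 \<le> p \<Longrightarrow> norm2q p n q h \<ge> 0"
  by (simp add: norm2q_def norm2inf_nonneg)

lemma norm21_nonneg: "norm21 p n h \<ge> 0"
  by (simp add: norm21_def sum_nonneg blknorm_nonneg)

lemma holder_blk:
  assumes S: "S \<subseteq> {..<p}" and cS: "card S \<le> k" and k: "1 \<le> k" and q: "1 < q" and p: "1 \<le> p"
  shows "(\<Sum>i\<in>S. blknorm n h i) \<le> real k powr (1 - qinv q) * norm2q p n q h"
proof -
  have finS: "finite S" using S finite_subset by blast
  from q_cases[OF q] show ?thesis
  proof
    assume qi: "q = \<infinity>"
    have "(\<Sum>i\<in>S. blknorm n h i) \<le> (\<Sum>i\<in>S. norm2inf p n h)"
      by (rule sum_mono) (use S norm2inf_ge in auto)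
    also have "\<dots> = real (card S) * norm2inf p n h" by simp
    also have "\<dots> \<le> real k * norm2inf p n h"
      by (rule mult_right_mono) (use cS norm2inf_nonneg[OF p] in auto)
    finally show ?thesis using qi k by (simp add: qinv_def norm2q_def)
  next
    assume "\<exists>r. q = ereal r \<and> r > 1"
    then obtain r where qr: "q = ereal r" and r: "r > 1" by blast
    have "(\<Sum>i\<in>S. blknorm n h i) \<le> real (card S) powr (1 - 1/r) * (\<Sum>i\<in>S. blknorm n h i powr r) powr (1/r)"
      by (rule holder_card[OF finS blknorm_nonneg r])
    also have "\<dots> \<le> real k powr (1 - 1/r) * (\<Sum>i<p. blknorm n h i powr r) powr (1/r)"
    proof (rule mult_mono)
      show "real (card S) powr (1 - 1/r) \<le> real k powr (1 - 1/r)"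
        by (rule powr_mono2) (use r cS in auto)
      show "(\<Sum>i\<in>S. blknorm n h i powr r) powr (1/r) \<le> (\<Sum>i<p. blknorm n h i powr r) powr (1/r)"
        by (rule powr_mono2) (use r S in \<open>auto intro!: sum_nonneg sum_mono2\<close>)
    qed auto
    finally show ?thesis using qr r by (simp add: qinv_def norm2q_def)
  qed
qed

lemma blknorm_pos_of:
  assumes "j < n" "h (i*n+j) \<noteq> 0" shows "blknorm n h i > 0"
proof -
  have "(h (i*n+j))\<^sup>2 \<le> (\<Sum>j<n. (h (i*n+j))\<^sup>2)"
    by (rule member_le_sum[where f="\<lambda>j. (h (i*n+j))\<^sup>2"]) (use assms in auto)
  moreover have "(h (i*n+j))\<^sup>2 > 0" using assms by simp
  ultimately have "(\<Sum>j<n. (h (i*n+j))\<^sup>2) > 0" by linarith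
  thus ?thesis by (simp add: blknorm_def)
qed

lemma nonzero_blk:
  assumes "nonzero_vec (p*n) h" shows "\<exists>i<p. blknorm n h i > 0"
proof -
  obtain j where j: "j < p*n" "h j \<noteq> 0" using assms by (auto simp: nonzero_vec_def)
  have n: "n > 0" using j(1) by (cases n) auto
  have i: "j div n < p" using j(1) by (simp add: less_mult_imp_div_less)
  have "blknorm n h (j div n) > 0"
    by (rule blknorm_pos_of[of "j mod n"]) (use n j(2) in simp_all)
  thus ?thesis using i by blast
qed

lemma nonzero_p: "nonzero_vec (p*n) h \<Longrightarrow> 1 \<le> p"
  by (cases p) (auto simp: nonzero_vec_def)

lemma norm2q_pos:
  assumes h: "nonzero_vec (p*n) h" and q: "1 < q" shows "norm2q p n q h > 0"
proof -
  obtain i where i: "i < p" "blknorm n h i > 0" using nonzero_blk[OF h] by blast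
  from q_cases[OF q] show ?thesis
  proof
    assume "q = \<infinity>"
    thus ?thesis using norm2inf_ge[OF i(1), of n h] i(2) by (simp add: norm2q_def)
  next
    assume "\<exists>r. q = ereal r \<and> r > 1"
    then obtain r where qr: "q = ereal r" and r: "r > 1" by blast
    have "blknorm n h i powr r \<le> (\<Sum>i<p. blknorm n h i powr r)"
      by (rule member_le_sum[where f="\<lambda>i. blknorm n h i powr r"]) (use i in auto)
    moreover have "blknorm n h i powr r > 0" using i(2) by simp
    ultimately have "(\<Sum>i<p. blknorm n h i powr r) > 0" by linarith
    thus ?thesis using qr by (simp add: norm2q_def)
  qed
qed

lemma kq_bound:
  assumes h: "nonzero_vec (p*n) h" and q: "1 < q" and C: "C > 0" and k: "1 \<le> k"
    and b: "norm21 p n h \<le> C * real k powr (1 - qinv q) * norm2q p n q h"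
  shows "kq p n q h \<le> C powr qexp q * real k"
proof -
  have Np: "norm2q p n q h > 0" by (rule norm2q_pos[OF h q])
  have d: "norm21 p n h / norm2q p n q h \<le> C * real k powr (1 - qinv q)"
    using b Np by (simp add: pos_divide_le_eq)
  from q_cases[OF q] show ?thesis
  proof
    assume qi: "q = \<infinity>"
    thus ?thesis using d k C by (simp add: kq_def qexp_def qinv_def norm2q_def)
  next
    assume "\<exists>r. q = ereal r \<and> r > 1"
    then obtain r where qr: "q = ereal r" and r: "r > 1" by blast
    have "kq p n q h = (norm21 p n h / norm2q p n q h) powr (r / (r - 1))"
      using qr by (simp add: kq_def qexp_def)
    also have "\<dots> \<le> (C * real k powr (1 - 1/r)) powr (r / (r - 1))"
      by (rule powr_mono2) (use r d qr Np norm21_nonneg in \<open>auto simp: qinv_def\<close>)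
    also have "\<dots> = C powr (r / (r - 1)) * real k powr ((1 - 1/r) * (r / (r - 1)))"
      using C by (simp add: powr_mult powr_powr)
    also have "(1 - 1/r) * (r / (r - 1)) = 1" using r by (simp add: field_simps)
    finally show ?thesis using qr k by (simp add: qexp_def)
  qed
qed

lemma beta_le:
  assumes h: "nonzero_vec (p*n) h" and q: "1 < q" and s: "kq p n q h \<le> s"
  shows "beta m p n A q s * norm2q p n q h \<le> l2norm m (matvec (p*n) A h)"
proof -
  have p: "1 \<le> p" by (rule nonzero_p[OF h])
  have Np: "norm2q p n q h > 0" by (rule norm2q_pos[OF h q])
  have "beta m p n A q s \<le> l2norm m (matvec (p*n) A h) / norm2q p n q h"
    unfolding beta_def
  proof (rule cInf_lower)
    show "l2norm m (matvec (p*n) A h) / norm2q p n q h \<in> {l2norm m (matvec (p * n) A z) / norm2q p n q z | z.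
      nonzero_vec (p * n) z \<and> kq p n q z \<le> s}" using h s by blast
    show "bdd_below {l2norm m (matvec (p * n) A z) / norm2q p n q z | z.
      nonzero_vec (p * n) z \<and> kq p n q z \<le> s}"
      by (rule bdd_belowI[where m=0]) (auto intro!: divide_nonneg_nonneg l2norm_nonneg norm2q_nonneg[OF p])
  qed
  thus ?thesis using Np by (simp add: pos_le_divide_eq)
qed

lemma norm2q_zero:
  assumes h: "\<not> nonzero_vec (p*n) h" and p: "1 \<le> p"
  shows "norm2q p n q h = 0"
proof -
  have z: "blknorm n h i = 0" if "i < p" for i
  proof -
    have "\<And>j. j < n \<Longrightarrow> h (i*n+j) = 0"
    proof -
      fix j assume j: "j < n"
      have "i*n+j < i*n + n" using j by simp
      also have "i*n + n \<le> p*n" using that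
        by (metis Suc_leI add.commute mult_Suc mult_le_mono1)
      finally show "h (i*n+j) = 0" using h by (auto simp: nonzero_vec_def)
    qed
    thus ?thesis by (simp add: blknorm_def)
  qed
  have "norm2inf p n h = 0"
    using norm2inf_attained[OF p, of n h] z by force
  thus ?thesis using z by (simp add: norm2q_def)
qed

lemma core:
  assumes S: "S \<subseteq> {..<p}" and cS: "card S \<le> k" and k: "1 \<le> k" and q: "1 < q" and p: "1 \<le> p"
    and C: "C > 0" and cone: "norm21 p n h \<le> C * (\<Sum>i\<in>S. blknorm n h i)"
  shows "(\<Sum>i\<in>S. blknorm n h i) \<le> real k powr (1 - qinv q) * norm2q p n q h"
    and "norm21 p n h \<le> C * real k powr (1 - qinv q) * norm2q p n q h"
    and "beta m p n A q (C powr qexp q * real k) * norm2q p n q h \<le> l2norm m (matvec (p*n) A h)"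
proof -
  show h1: "(\<Sum>i\<in>S. blknorm n h i) \<le> real k powr (1 - qinv q) * norm2q p n q h"
    by (rule holder_blk[OF S cS k q p])
  show h2: "norm21 p n h \<le> C * real k powr (1 - qinv q) * norm2q p n q h"
  proof -
    have "C * (\<Sum>i\<in>S. blknorm n h i) \<le> C * (real k powr (1 - qinv q) * norm2q p n q h)"
      by (rule mult_left_mono[OF h1]) (use C in simp)
    thus ?thesis using cone by (simp add: mult.assoc)
  qed
  show "beta m p n A q (C powr qexp q * real k) * norm2q p n q h \<le> l2norm m (matvec (p*n) A h)"
  proof (cases "nonzero_vec (p*n) h")
    case True
    show ?thesis by (rule beta_le[OF True q kq_bound[OF True q C k h2]])
  next
    case False
    thus ?thesis using norm2q_zero[OF False p] by (simp add: l2norm_nonneg)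
  qed
qed

lemma support_decomp:
  fixes x xh :: "nat \<Rightarrow> real" and p n :: nat
  defines "S \<equiv> {i. i<p \<and> (\<exists>j<n. x(i*n+j) \<noteq> 0)}"
  shows "norm21 p n (\<lambda>j. xh j - x j) = (\<Sum>i\<in>S. blknorm n (\<lambda>j. xh j - x j) i)
           + (\<Sum>i\<in>{..<p}-S. blknorm n (\<lambda>j. xh j - x j) i)"
    and "norm21 p n x - (\<Sum>i\<in>S. blknorm n (\<lambda>j. xh j - x j) i)
           + (\<Sum>i\<in>{..<p}-S. blknorm n (\<lambda>j. xh j - x j) i) \<le> norm21 p n xh"
proof -
  have Ss: "S \<subseteq> {..<p}" by (auto simp: S_def)
  have dec: "\<And>f. (\<Sum>i<p. f i) = (\<Sum>i\<in>S. f i) + (\<Sum>i\<in>{..<p}-S. f i)"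
    using sum.subset_diff[OF Ss] by (simp add: add.commute)
  show "norm21 p n (\<lambda>j. xh j - x j) = (\<Sum>i\<in>S. blknorm n (\<lambda>j. xh j - x j) i)
           + (\<Sum>i\<in>{..<p}-S. blknorm n (\<lambda>j. xh j - x j) i)"
    unfolding norm21_def by (rule dec)
  have out: "x (i*n+j) = 0" if "i \<in> {..<p}-S" "j < n" for i j
    using that by (auto simp: S_def)
  have o1: "blknorm n x i = 0" if "i \<in> {..<p}-S" for i
    using out[OF that] by (simp add: blknorm_def)
  have o2: "blknorm n xh i = blknorm n (\<lambda>j. xh j - x j) i" if "i \<in> {..<p}-S" for i
    using out[OF that] by (simp add: blknorm_def)
  have i1: "blknorm n x i \<le> blknorm n xh i + blknorm n (\<lambda>j. xh j - x j) i" for i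
    using blknorm_diff[of n xh "\<lambda>j. xh j - x j" i] by simp
  have "norm21 p n x = (\<Sum>i\<in>S. blknorm n x i)"
    unfolding norm21_def dec[of "blknorm n x"] using o1 by simp
  also have "\<dots> \<le> (\<Sum>i\<in>S. blknorm n xh i) + (\<Sum>i\<in>S. blknorm n (\<lambda>j. xh j - x j) i)"
    unfolding sum.distrib[symmetric] by (rule sum_mono) (rule i1)
  finally have "norm21 p n x \<le> (\<Sum>i\<in>S. blknorm n xh i) + (\<Sum>i\<in>S. blknorm n (\<lambda>j. xh j - x j) i)" .
  moreover have "norm21 p n xh = (\<Sum>i\<in>S. blknorm n xh i) + (\<Sum>i\<in>{..<p}-S. blknorm n (\<lambda>j. xh j - x j) i)"
    unfolding norm21_def dec[of "blknorm n xh"] using o2 by simp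
  ultimately show "norm21 p n x - (\<Sum>i\<in>S. blknorm n (\<lambda>j. xh j - x j) i)
           + (\<Sum>i\<in>{..<p}-S. blknorm n (\<lambda>j. xh j - x j) i) \<le> norm21 p n xh" by linarith
qed

lemma kpow_sq: "real k powr (2 - 2 * t) = (real k powr (1 - t))\<^sup>2"
proof -
  have "real k powr (2 - 2 * t) = real k powr ((1 - t) + (1 - t))" by simp
  also have "\<dots> = (real k powr (1 - t))\<^sup>2" by (simp only: powr_add power2_eq_square)
  finally show ?thesis .
qed

lemma arith_bp:
  fixes b Nq N1 K z :: real
  assumes "b > 0" "b * Nq \<le> 2 * z" "N1 \<le> 2 * K * Nq" "K \<ge> 0"
  shows "Nq \<le> 2 * z / b \<and> N1 \<le> 4 * K * z / b"
proof -
  have n: "Nq \<le> 2 * z / b" using assms by (simp add: pos_le_divide_eq mult.commute)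
  have "N1 \<le> 2 * K * (2 * z / b)" using assms(3) mult_left_mono[OF n, of "2*K"] assms(4) by linarith
  thus ?thesis using n by simp
qed

lemma arith_ds:
  fixes b Nq N1 K l mu :: real
  assumes b: "b > 0" and Nq: "Nq \<ge> 0" and bl: "b * Nq \<le> l" and l2: "l\<^sup>2 \<le> 2 * mu * N1"
    and N1: "N1 \<le> 2 * K * Nq" and K: "K \<ge> 0" and mu: "mu > 0"
  shows "Nq \<le> 4 * K / b\<^sup>2 * mu \<and> N1 \<le> 8 * K\<^sup>2 / b\<^sup>2 * mu"
proof -
  have "(b * Nq)\<^sup>2 \<le> l\<^sup>2" using bl b Nq by (intro power_mono) auto
  also have "\<dots> \<le> 2 * mu * (2 * K * Nq)"
  proof -
    have "2 * mu * N1 \<le> 2 * mu * (2 * K * Nq)" by (rule mult_left_mono[OF N1]) (use mu in simp)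
    thus ?thesis using l2 by linarith
  qed
  finally have e: "b\<^sup>2 * Nq * Nq \<le> (4 * K * mu) * Nq" by (simp add: power2_eq_square algebra_simps)
  have n: "Nq \<le> 4 * K / b\<^sup>2 * mu"
  proof (cases "Nq = 0")
    case True thus ?thesis using K b mu by simp
  next
    case False
    hence "b\<^sup>2 * Nq \<le> 4 * K * mu" using e Nq by (simp add: mult_le_cancel_right)
    thus ?thesis using b by (simp add: pos_le_divide_eq mult.commute)
  qed
  have "N1 \<le> 2 * K * (4 * K / b\<^sup>2 * mu)" using N1 mult_left_mono[OF n, of "2*K"] K by linarith
  thus ?thesis using n by (simp add: power2_eq_square)
qed

lemma sq_expand: fixes e w :: "nat \<Rightarrow> real" shows "(\<Sum>r<m. (e r - w r)\<^sup>2) = (\<Sum>r<m. (e r)\<^sup>2) - 2 * (\<Sum>r<m. e r * w r) + (\<Sum>r<m. (w r)\<^sup>2)"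
  by (simp add: power2_diff sum.distrib sum_subtractf sum_distrib_left mult.assoc)

lemma lasso_cone:
  fixes kap mu hS hSc L :: real
  assumes "0 < kap" "kap < 1" "mu > 0" "L \<ge> 0"
    and opt: "L / 2 + mu * (hSc - hS) \<le> kap * mu * (hS + hSc)"
  shows "hS + hSc \<le> 2 / (1 - kap) * hS" and "L / 2 \<le> mu * (1 + kap) * hS - mu * (1 - kap) * hSc"
proof -
  have "mu * ((1 - kap) * hSc) \<le> mu * ((1 + kap) * hS)"
    using opt assms(4) by (simp add: algebra_simps)
  hence a: "(1 - kap) * hSc \<le> (1 + kap) * hS" using assms(3) by simp
  have "(1 - kap) * (hS + hSc) \<le> 2 * hS" using a by (simp add: algebra_simps)
  thus "hS + hSc \<le> 2 / (1 - kap) * hS" using assms(2)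
    by (simp add: pos_le_divide_eq mult.commute)
  show "L / 2 \<le> mu * (1 + kap) * hS - mu * (1 - kap) * hSc"
    using opt by (simp add: algebra_simps)
qed

lemma arith_lasso:
  fixes b Nq N1 K l mu kap hS hSc :: real
  assumes b: "b > 0" and Nq: "Nq \<ge> 0" and bl: "b * Nq \<le> l"
    and l2: "l\<^sup>2 / 2 \<le> mu * (1 + kap) * hS - mu * (1 - kap) * hSc"
    and hSK: "hS \<le> K * Nq" and hSc: "hSc \<ge> 0"
    and N1: "N1 \<le> 2 / (1 - kap) * K * Nq" and K: "K \<ge> 0" and mu: "mu > 0"
    and kap: "0 < kap" "kap < 1"
  shows "Nq \<le> (1 + kap) / (1 - kap) * (2 * K / b\<^sup>2) * mu \<and>
         N1 \<le> (1 + kap) / (1 - kap)\<^sup>2 * (4 * K\<^sup>2 / b\<^sup>2) * mu"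
proof -
  have "(b * Nq)\<^sup>2 \<le> l\<^sup>2" using bl b Nq by (intro power_mono) auto
  also have "\<dots> \<le> 2 * mu * (1 + kap) * hS"
  proof -
    have "mu * (1 - kap) * hSc \<ge> 0" using hSc mu kap by simp
    thus ?thesis using l2 by linarith
  qed
  also have "\<dots> \<le> 2 * mu * (1 + kap) * (K * Nq)"
    using hSK mu kap by (intro mult_left_mono) auto
  finally have e: "b\<^sup>2 * Nq * Nq \<le> (2 * mu * (1 + kap) * K) * Nq" by (simp add: power2_eq_square algebra_simps)
  have n0: "Nq \<le> 2 * mu * (1 + kap) * K / b\<^sup>2"
  proof (cases "Nq = 0")
    case True thus ?thesis using K b mu kap by simp
  next
    case False
    hence "b\<^sup>2 * Nq \<le> 2 * mu * (1 + kap) * K" using e Nq by (simp add: mult_le_cancel_right)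
    thus ?thesis using b by (simp add: pos_le_divide_eq mult.commute)
  qed
  define X where "X = 2 * mu * (1 + kap) * K / b\<^sup>2"
  have X0: "X \<ge> 0" using mu kap K b by (simp add: X_def)
  have i1: "1 \<le> 1 / (1 - kap)" using kap by simp
  have "X * 1 \<le> X * (1 / (1 - kap))" by (rule mult_left_mono[OF i1 X0])
  hence "X \<le> X * (1 / (1 - kap))" by simp
  moreover have "X * (1 / (1 - kap)) = (1 + kap) / (1 - kap) * (2 * K / b\<^sup>2) * mu"
    unfolding X_def by (simp add: field_simps)
  ultimately have n: "Nq \<le> (1 + kap) / (1 - kap) * (2 * K / b\<^sup>2) * mu"
    using n0 unfolding X_def by linarith
  have "N1 \<le> 2 / (1 - kap) * K * X"
    using N1 mult_left_mono[OF n0[folded X_def], of "2 / (1 - kap) * K"] K kap by simp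
  also have "\<dots> = (1 + kap) / (1 - kap) * (4 * K\<^sup>2 / b\<^sup>2) * mu"
    by (simp add: X_def power2_eq_square)
  also have "\<dots> \<le> (1 + kap) / (1 - kap) * (4 * K\<^sup>2 / b\<^sup>2) * mu * (1 / (1 - kap))"
  proof -
    have Y0: "(1 + kap) / (1 - kap) * (4 * K\<^sup>2 / b\<^sup>2) * mu \<ge> 0"
      using kap mu b K by (auto intro!: mult_nonneg_nonneg divide_nonneg_nonneg)
    have "(1 + kap) / (1 - kap) * (4 * K\<^sup>2 / b\<^sup>2) * mu * 1 \<le> (1 + kap) / (1 - kap) * (4 * K\<^sup>2 / b\<^sup>2) * mu * (1 / (1 - kap))"
      by (rule mult_left_mono[OF i1 Y0])
    thus ?thesis by simp
  qed
  also have "\<dots> = (1 + kap) / (1 - kap)\<^sup>2 * (4 * K\<^sup>2 / b\<^sup>2) * mu"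
    by (simp add: power2_eq_square)
  finally show ?thesis using n by simp
qed

theorem theorem1:
  fixes m p n k :: nat and A :: "nat \<Rightarrow> nat \<Rightarrow> real"
    and x \<epsilon> :: "nat \<Rightarrow> real" and q :: ereal and \<zeta> \<mu> :: real
  assumes "1 \<le> p" and "1 \<le> n" and "1 \<le> k"
    and "norm20 p n x \<le> k"
    and "1 < q"
    and "0 \<le> \<zeta>" and "0 < \<mu>"
  defines "y \<equiv> (\<lambda>r. matvec (p * n) A x r + \<epsilon> r)"
  shows
   "(l2norm m \<epsilon> \<le> \<zeta> \<longrightarrow>
      (\<forall>xh. bp_solution m p n A y \<zeta> xh \<longrightarrow>
         (let b = beta m p n A q (2 powr qexp q * real k) in
          0 < b \<longrightarrow>
            norm2q p n q (\<lambda>j. xh j - x j) \<le> 2 * \<zeta> / b \<and>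
            norm21 p n (\<lambda>j. xh j - x j) \<le> 4 * real k powr (1 - qinv q) * \<zeta> / b)))
    \<and>
    (norm2inf p n (tmatvec m A \<epsilon>) \<le> \<mu> \<longrightarrow>
      (\<forall>xh. ds_solution m p n A y \<mu> xh \<longrightarrow>
         (let b = beta m p n A q (2 powr qexp q * real k) in
          0 < b \<longrightarrow>
            norm2q p n q (\<lambda>j. xh j - x j) \<le> 4 * real k powr (1 - qinv q) / b\<^sup>2 * \<mu> \<and>
            norm21 p n (\<lambda>j. xh j - x j) \<le> 8 * real k powr (2 - 2 * qinv q) / b\<^sup>2 * \<mu>)))
    \<and>
    (\<forall>\<kappa>::real. 0 < \<kappa> \<and> \<kappa> < 1 \<and> norm2inf p n (tmatvec m A \<epsilon>) \<le> \<kappa> * \<mu> \<longrightarrow>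
      (\<forall>xh. lasso_solution m p n A y \<mu> xh \<longrightarrow>
         (let b = beta m p n A q ((2 / (1 - \<kappa>)) powr qexp q * real k) in
          0 < b \<longrightarrow>
            norm2q p n q (\<lambda>j. xh j - x j)
              \<le> (1 + \<kappa>) / (1 - \<kappa>) * (2 * real k powr (1 - qinv q) / b\<^sup>2) * \<mu> \<and>
            norm21 p n (\<lambda>j. xh j - x j)
              \<le> (1 + \<kappa>) / (1 - \<kappa>)\<^sup>2 * (4 * real k powr (2 - 2 * qinv q) / b\<^sup>2) * \<mu>)))"
proof -
  define S where "S = {i. i<p \<and> (\<exists>j<n. x(i*n+j) \<noteq> 0)}"
  have Ss: "S \<subseteq> {..<p}" by (auto simp: S_def)
  have cS: "card S \<le> k" using assms(4) by (simp add: S_def norm20_def)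
  have k1: "1 \<le> k" and p1: "1 \<le> p" and q1: "1 < q" using assms by auto
  define K where "K = real k powr (1 - qinv q)"
  have K0: "K \<ge> 0" by (simp add: K_def)
  have res_x: "(\<lambda>r. y r - matvec (p * n) A x r) = \<epsilon>" by (simp add: y_def)
  have res: "\<And>xh r. y r - matvec (p * n) A xh r = \<epsilon> r - matvec (p*n) A (\<lambda>j. xh j - x j) r"
    by (simp add: y_def matvec_diff)
  note dec = support_decomp[where p=p and n=n and x=x, folded S_def]
  have w_eq: "\<And>xh. (\<lambda>r. matvec (p*n) A (\<lambda>j. xh j - x j) r) = (\<lambda>r. \<epsilon> r - (y r - matvec (p * n) A xh r))"
    using res by simp
  have P1: "l2norm m \<epsilon> \<le> \<zeta> \<longrightarrow>
      (\<forall>xh. bp_solution m p n A y \<zeta> xh \<longrightarrow>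
         (let b = beta m p n A q (2 powr qexp q * real k) in
          0 < b \<longrightarrow>
            norm2q p n q (\<lambda>j. xh j - x j) \<le> 2 * \<zeta> / b \<and>
            norm21 p n (\<lambda>j. xh j - x j) \<le> 4 * real k powr (1 - qinv q) * \<zeta> / b))"
  proof (intro impI allI)
    fix xh assume eps: "l2norm m \<epsilon> \<le> \<zeta>" and sol: "bp_solution m p n A y \<zeta> xh"
    define h where "h = (\<lambda>j. xh j - x j)"
    define hS where "hS = (\<Sum>i\<in>S. blknorm n h i)"
    define hSc where "hSc = (\<Sum>i\<in>{..<p}-S. blknorm n h i)"
    have N1h: "norm21 p n h = hS + hSc" using dec(1)[of xh] by (simp add: h_def hS_def hSc_def)
    have N1xh: "norm21 p n x - hS + hSc \<le> norm21 p n xh" using dec(2)[of xh] by (simp add: h_def hS_def hSc_def)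
    have "norm21 p n xh \<le> norm21 p n x" using sol eps res_x unfolding bp_solution_def by auto
    hence cone: "norm21 p n h \<le> 2 * hS" using N1h N1xh by linarith
    have c2: "norm21 p n h \<le> 2 * K * norm2q p n q h"
      using core(2)[OF Ss cS k1 q1 p1 _ cone[unfolded hS_def]] by (simp add: K_def)
    have c3: "beta m p n A q (2 powr qexp q * real k) * norm2q p n q h \<le> l2norm m (matvec (p*n) A h)"
      using core(3)[OF Ss cS k1 q1 p1 _ cone[unfolded hS_def]] by simp
    have "l2norm m (matvec (p*n) A h) \<le> l2norm m \<epsilon> + l2norm m (\<lambda>r. y r - matvec (p * n) A xh r)"
      unfolding h_def w_eq by (rule l2norm_diff)
    also have "\<dots> \<le> 2 * \<zeta>" using eps sol unfolding bp_solution_def by linarith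
    finally have lAh: "l2norm m (matvec (p*n) A h) \<le> 2 * \<zeta>" .
    show "let b = beta m p n A q (2 powr qexp q * real k) in
          0 < b \<longrightarrow>
            norm2q p n q (\<lambda>j. xh j - x j) \<le> 2 * \<zeta> / b \<and>
            norm21 p n (\<lambda>j. xh j - x j) \<le> 4 * real k powr (1 - qinv q) * \<zeta> / b"
      unfolding Let_def h_def[symmetric] K_def[symmetric]
    proof
      assume b: "0 < beta m p n A q (2 powr qexp q * real k)"
      show "norm2q p n q h \<le> 2 * \<zeta> / beta m p n A q (2 powr qexp q * real k) \<and>
            norm21 p n h \<le> 4 * K * \<zeta> / beta m p n A q (2 powr qexp q * real k)"
        by (rule arith_bp[OF b _ c2 K0]) (use c3 lAh in linarith)
    qed
  qed
  have P2: "norm2inf p n (tmatvec m A \<epsilon>) \<le> \<mu> \<longrightarrow>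
      (\<forall>xh. ds_solution m p n A y \<mu> xh \<longrightarrow>
         (let b = beta m p n A q (2 powr qexp q * real k) in
          0 < b \<longrightarrow>
            norm2q p n q (\<lambda>j. xh j - x j) \<le> 4 * real k powr (1 - qinv q) / b\<^sup>2 * \<mu> \<and>
            norm21 p n (\<lambda>j. xh j - x j) \<le> 8 * real k powr (2 - 2 * qinv q) / b\<^sup>2 * \<mu>))"
  proof (intro impI allI)
    fix xh assume eps: "norm2inf p n (tmatvec m A \<epsilon>) \<le> \<mu>" and sol: "ds_solution m p n A y \<mu> xh"
    define h where "h = (\<lambda>j. xh j - x j)"
    define hS where "hS = (\<Sum>i\<in>S. blknorm n h i)"
    define hSc where "hSc = (\<Sum>i\<in>{..<p}-S. blknorm n h i)"
    have N1h: "norm21 p n h = hS + hSc" using dec(1)[of xh] by (simp add: h_def hS_def hSc_def)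
    have N1xh: "norm21 p n x - hS + hSc \<le> norm21 p n xh" using dec(2)[of xh] by (simp add: h_def hS_def hSc_def)
    have "norm21 p n xh \<le> norm21 p n x" using sol eps res_x unfolding ds_solution_def by auto
    hence cone: "norm21 p n h \<le> 2 * hS" using N1h N1xh by linarith
    have c2: "norm21 p n h \<le> 2 * K * norm2q p n q h"
      using core(2)[OF Ss cS k1 q1 p1 _ cone[unfolded hS_def]] by (simp add: K_def)
    have c3: "beta m p n A q (2 powr qexp q * real k) * norm2q p n q h \<le> l2norm m (matvec (p*n) A h)"
      using core(3)[OF Ss cS k1 q1 p1 _ cone[unfolded hS_def]] by simp
    define w where "w = matvec (p*n) A h"
    have tw: "tmatvec m A w = (\<lambda>j. tmatvec m A \<epsilon> j - tmatvec m A (\<lambda>r. y r - matvec (p * n) A xh r) j)"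
      unfolding w_def h_def w_eq by (rule ext, rule tmatvec_diff)
    have "norm2inf p n (tmatvec m A w) \<le> norm2inf p n (tmatvec m A \<epsilon>) + norm2inf p n (tmatvec m A (\<lambda>r. y r - matvec (p * n) A xh r))"
      unfolding tw by (rule norm2inf_diff[OF p1])
    also have "\<dots> \<le> 2 * \<mu>" using eps sol unfolding ds_solution_def by linarith
    finally have tw2: "norm2inf p n (tmatvec m A w) \<le> 2 * \<mu>" .
    have "(l2norm m w)\<^sup>2 = (\<Sum>r<m. w r * matvec (p*n) A h r)"
      unfolding l2norm_sq by (simp add: power2_eq_square w_def)
    also have "\<dots> \<le> norm21 p n h * norm2inf p n (tmatvec m A w)" by (rule dual_bound)
    also have "\<dots> \<le> norm21 p n h * (2 * \<mu>)" by (rule mult_left_mono[OF tw2 norm21_nonneg])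
    finally have l2: "(l2norm m w)\<^sup>2 \<le> 2 * \<mu> * norm21 p n h" by (simp add: mult_ac)
    show "let b = beta m p n A q (2 powr qexp q * real k) in
          0 < b \<longrightarrow>
            norm2q p n q (\<lambda>j. xh j - x j) \<le> 4 * real k powr (1 - qinv q) / b\<^sup>2 * \<mu> \<and>
            norm21 p n (\<lambda>j. xh j - x j) \<le> 8 * real k powr (2 - 2 * qinv q) / b\<^sup>2 * \<mu>"
      unfolding Let_def h_def[symmetric] kpow_sq K_def[symmetric]
    proof
      assume b: "0 < beta m p n A q (2 powr qexp q * real k)"
      show "norm2q p n q h \<le> 4 * K / (beta m p n A q (2 powr qexp q * real k))\<^sup>2 * \<mu> \<and>
            norm21 p n h \<le> 8 * K\<^sup>2 / (beta m p n A q (2 powr qexp q * real k))\<^sup>2 * \<mu>"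
        by (rule arith_ds[OF b norm2q_nonneg[OF p1] c3[folded w_def] l2 c2 K0 assms(7)])
    qed
  qed
  have P3: "\<forall>\<kappa>::real. 0 < \<kappa> \<and> \<kappa> < 1 \<and> norm2inf p n (tmatvec m A \<epsilon>) \<le> \<kappa> * \<mu> \<longrightarrow>
      (\<forall>xh. lasso_solution m p n A y \<mu> xh \<longrightarrow>
         (let b = beta m p n A q ((2 / (1 - \<kappa>)) powr qexp q * real k) in
          0 < b \<longrightarrow>
            norm2q p n q (\<lambda>j. xh j - x j)
              \<le> (1 + \<kappa>) / (1 - \<kappa>) * (2 * real k powr (1 - qinv q) / b\<^sup>2) * \<mu> \<and>
            norm21 p n (\<lambda>j. xh j - x j)
              \<le> (1 + \<kappa>) / (1 - \<kappa>)\<^sup>2 * (4 * real k powr (2 - 2 * qinv q) / b\<^sup>2) * \<mu>))"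
  proof (intro impI allI)
    fix \<kappa> :: real and xh
    assume kas: "0 < \<kappa> \<and> \<kappa> < 1 \<and> norm2inf p n (tmatvec m A \<epsilon>) \<le> \<kappa> * \<mu>"
      and sol: "lasso_solution m p n A y \<mu> xh"
    have ka: "0 < \<kappa>" "\<kappa> < 1" and eps: "norm2inf p n (tmatvec m A \<epsilon>) \<le> \<kappa> * \<mu>" using kas by auto
    define h where "h = (\<lambda>j. xh j - x j)"
    define hS where "hS = (\<Sum>i\<in>S. blknorm n h i)"
    define hSc where "hSc = (\<Sum>i\<in>{..<p}-S. blknorm n h i)"
    have N1h: "norm21 p n h = hS + hSc" using dec(1)[of xh] by (simp add: h_def hS_def hSc_def)
    have N1xh: "norm21 p n x - hS + hSc \<le> norm21 p n xh" using dec(2)[of xh] by (simp add: h_def hS_def hSc_def)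
    have hSc0: "hSc \<ge> 0" by (simp add: hSc_def sum_nonneg blknorm_nonneg)
    define w where "w = matvec (p*n) A h"
    define L where "L = (\<Sum>r<m. (w r)\<^sup>2)"
    have L0: "L \<ge> 0" by (simp add: L_def sum_nonneg)
    have "lasso_obj m p n A y \<mu> xh \<le> lasso_obj m p n A y \<mu> x" using sol by (simp add: lasso_solution_def)
    moreover have "lasso_obj m p n A y \<mu> xh = 1/2 * ((\<Sum>r<m. (\<epsilon> r)\<^sup>2) - 2 * (\<Sum>r<m. \<epsilon> r * w r) + L) + \<mu> * norm21 p n xh"
      unfolding lasso_obj_def l2norm_sq res L_def w_def h_def by (rule arg_cong2[where f="(+)"], simp only: sq_expand, rule refl)
    moreover have "lasso_obj m p n A y \<mu> x = 1/2 * (\<Sum>r<m. (\<epsilon> r)\<^sup>2) + \<mu> * norm21 p n x"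
      unfolding lasso_obj_def l2norm_sq res_x by simp
    ultimately have o1: "L / 2 - (\<Sum>r<m. \<epsilon> r * w r) + \<mu> * norm21 p n xh \<le> \<mu> * norm21 p n x" by (simp add: field_simps)
    have "(\<Sum>r<m. \<epsilon> r * w r) \<le> norm21 p n h * norm2inf p n (tmatvec m A \<epsilon>)"
      unfolding w_def by (rule dual_bound)
    also have "\<dots> \<le> norm21 p n h * (\<kappa> * \<mu>)" by (rule mult_left_mono[OF eps norm21_nonneg])
    finally have o2: "(\<Sum>r<m. \<epsilon> r * w r) \<le> \<kappa> * \<mu> * (hS + hSc)" using N1h by (simp add: mult_ac)
    have o3: "\<mu> * (norm21 p n x - hS + hSc) \<le> \<mu> * norm21 p n xh"
      by (rule mult_left_mono[OF N1xh]) (use assms(7) in simp)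
    have opt: "L / 2 + \<mu> * (hSc - hS) \<le> \<kappa> * \<mu> * (hS + hSc)"
      using o1 o2 o3 by (simp add: algebra_simps)
    note lc = lasso_cone[OF ka assms(7) L0 opt]
    have C0: "2 / (1 - \<kappa>) > 0" using ka by simp
    have cone: "norm21 p n h \<le> 2 / (1 - \<kappa>) * hS" using lc(1) N1h by simp
    have c1: "hS \<le> K * norm2q p n q h"
      using core(1)[OF Ss cS k1 q1 p1 C0 cone[unfolded hS_def]] by (simp add: K_def hS_def)
    have c2: "norm21 p n h \<le> 2 / (1 - \<kappa>) * K * norm2q p n q h"
      using core(2)[OF Ss cS k1 q1 p1 C0 cone[unfolded hS_def]] by (simp add: K_def)
    have c3: "beta m p n A q ((2 / (1 - \<kappa>)) powr qexp q * real k) * norm2q p n q h \<le> l2norm m w"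
      using core(3)[OF Ss cS k1 q1 p1 C0 cone[unfolded hS_def]] by (simp add: w_def)
    have l2: "(l2norm m w)\<^sup>2 / 2 \<le> \<mu> * (1 + \<kappa>) * hS - \<mu> * (1 - \<kappa>) * hSc"
      using lc(2) by (simp add: l2norm_sq L_def)
    show "let b = beta m p n A q ((2 / (1 - \<kappa>)) powr qexp q * real k) in
          0 < b \<longrightarrow>
            norm2q p n q (\<lambda>j. xh j - x j)
              \<le> (1 + \<kappa>) / (1 - \<kappa>) * (2 * real k powr (1 - qinv q) / b\<^sup>2) * \<mu> \<and>
            norm21 p n (\<lambda>j. xh j - x j)
              \<le> (1 + \<kappa>) / (1 - \<kappa>)\<^sup>2 * (4 * real k powr (2 - 2 * qinv q) / b\<^sup>2) * \<mu>"
      unfolding Let_def h_def[symmetric] kpow_sq K_def[symmetric]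
    proof
      assume b: "0 < beta m p n A q ((2 / (1 - \<kappa>)) powr qexp q * real k)"
      show "norm2q p n q h \<le> (1 + \<kappa>) / (1 - \<kappa>) * (2 * K / (beta m p n A q ((2 / (1 - \<kappa>)) powr qexp q * real k))\<^sup>2) * \<mu> \<and>
            norm21 p n h \<le> (1 + \<kappa>) / (1 - \<kappa>)\<^sup>2 * (4 * K\<^sup>2 / (beta m p n A q ((2 / (1 - \<kappa>)) powr qexp q * real k))\<^sup>2) * \<mu>"
        by (rule arith_lasso[OF b norm2q_nonneg[OF p1] c3 l2 c1 hSc0 c2 K0 assms(7) ka])
    qed
  qed
  show ?thesis using P1 P2 P3 by blast
qed

end
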